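(* Normalize $\operatorname{var}(X)=1$ and $\operatorname{var}(W_1)=I_{d_1}$, suppose $\operatorname{var}(Y,X,W_1)$ is positive definite, $\sigma_{W_1,Y}\ne\sigma_{X,Y}\sigma_{W_1,X}$, and $\|c\|<1$. For any $r_X\in\mathbb R^{d_1}$ with $r_X'c\ne-1$ and $0<z_X(r_X,c)^2<k_0$, $$\bigcup_{r_Y\in\mathbb R^{d_1}}\mathcal B(r_X,r_Y,c)=\big(\beta_{\text{med}}-\sqrt{\text{devsq}(z_X(r_X,c))},\ \beta_{\text{med}}+\sqrt{\text{devsq}(z_X(r_X,c))}\big)\setminus\mathcal B^0,$$ where $\mathcal B^0$ is a set containing at most one point.
   Context: For random vectors $A,B$ with $\operatorname{var}(B)$ invertible, $A^{\perp B}=A-\operatorname{cov}(A,B)\operatorname{var}(B)^{-1}B$. $\sigma_{A,B}=\operatorname{cov}(A,B)$. $\beta_{\text{med}}$ is the coefficient on $X$ in the linear projection of $Y$ on $(1,X,W_1)$. $k_0=\operatorname{var}(X^{\perp W_1})$, $k_1=\operatorname{cov}(Y^{\perp W_1},X^{\perp W_1})$; $\text{devsq}(z)=\frac{\operatorname{var}(Y^{\perp X,W_1})}{k_0}\frac{z^2}{k_0-z^2}$; $z_X(r_X,c)=\frac{r_X'\sigma_{W_1,X}\sqrt{1-\|c\|^2}}{1+r_X'c}$. For $r_X,r_Y,c\in\mathbb R^{d_1}$, $\mathcal B(r_X,r_Y,c)$ is the set of $b\in\mathbb R$ such that for some $(p_1,g_1)\in\mathbb R^{d_1}\times\mathbb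 R^{d_1}$ (with $\Sigma_{\text{obs}}=\operatorname{var}(W_1)$): $\operatorname{cov}(Y,X)=b\operatorname{var}(X)+g_1'(\Sigma_{\text{obs}}+cr_X'+r_Yc'+r_Yr_X')p_1$; $\operatorname{cov}(Y,W_1)=b\operatorname{cov}(X,W_1)+g_1'(\Sigma_{\text{obs}}+r_Yc')$; $\operatorname{cov}(X,W_1)=p_1'(\Sigma_{\text{obs}}+r_Xc')$; $\operatorname{var}(Y)>b^2\operatorname{var}(X)+g_1'(\Sigma_{\text{obs}}+r_Yr_Y'+2r_Yc')g_1+2bg_1'(\Sigma_{\text{obs}}+cr_X'+r_Yc'+r_Yr_X')p_1$; $\operatorname{var}(X)>p_1'(\Sigma_{\text{obs}}+2r_Xc'+r_Xr_X')p_1$; $1>c'\Sigma_{\text{obs}}^{-1}c$. *)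

theory Defs
  imports "HOL-Analysis.Analysis"
begin

text \<open>Second-moment structure of the random vector (Y, X, W1), with Y, X scalar and
  W1 in R^d1 (d1 = CARD('n)). All objects in the statement depend on the
  distribution only through these moments.\<close>
record 'n moments =
  varY  :: real
  varX  :: real
  covYX :: real
  covWX :: "real^'n"
  covWY :: "real^'n"
  varW  :: "real^'n^'n"

definition var_pos_def :: "'n::finite moments \<Rightarrow> bool" where
  "var_pos_def m \<longleftrightarrow> transpose (varW m) = varW m \<and>
     (\<forall>(a::real) (b::real) (w::real^'n). (a, b, w) \<noteq> (0, 0, 0) \<longrightarrow>
        a\<^sup>2 * varY m + b\<^sup>2 * varX m + w \<bullet> (varW m *v w)
        + 2 * a * b * covYX m + 2 * a * (w \<bullet> covWY m) + 2 * b * (w \<bullet> covWX m) > 0)"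

text \<open>Coefficients (b, g) of the linear projection of Y on (1, X, W1), characterised by
  the normal equations cov(Y - bX - g'W1, X) = 0 and cov(Y - bX - g'W1, W1) = 0.\<close>
definition proj_coefs :: "'n::finite moments \<Rightarrow> real \<times> (real^'n)" where
  "proj_coefs m = (THE bg. case bg of (b, g) \<Rightarrow>
      covYX m = b * varX m + g \<bullet> covWX m \<and> covWY m = b *\<^sub>R covWX m + varW m *v g)"

definition beta_med :: "'n::finite moments \<Rightarrow> real" where
  "beta_med m = fst (proj_coefs m)"

text \<open>var(Y^{\<perp> X,W1}) = var(Y - b X - g'W1) = var Y - b cov(X,Y) - g' cov(W1,Y).\<close>
definition var_Y_perp_XW :: "'n::finite moments \<Rightarrow> real" where
  "var_Y_perp_XW m = (case proj_coefs m of (b, g) \<Rightarrow> varY m - b * covYX m - g \<bullet> covWY m)"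

definition k0 :: "'n::finite moments \<Rightarrow> real" where
  "k0 m = varX m - covWX m \<bullet> (matrix_inv (varW m) *v covWX m)"

definition k1 :: "'n::finite moments \<Rightarrow> real" where
  "k1 m = covYX m - covWY m \<bullet> (matrix_inv (varW m) *v covWX m)"

definition devsq :: "'n::finite moments \<Rightarrow> real \<Rightarrow> real" where
  "devsq m z = var_Y_perp_XW m / k0 m * (z\<^sup>2 / (k0 m - z\<^sup>2))"

definition z_X :: "'n::finite moments \<Rightarrow> real^'n \<Rightarrow> real^'n \<Rightarrow> real" where
  "z_X m rX c = (rX \<bullet> covWX m) * sqrt (1 - (norm c)\<^sup>2) / (1 + rX \<bullet> c)"

definition outer :: "real^'n \<Rightarrow> real^'n \<Rightarrow> real^'n^'n" where
  "outer u v = (\<chi> i j. u $ i * v $ j)"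

definition BSet :: "'n::finite moments \<Rightarrow> real^'n \<Rightarrow> real^'n \<Rightarrow> real^'n \<Rightarrow> real set" where
  "BSet m rX rY c = {b. \<exists>p1 g1 :: real^'n.
     let S = varW m in
     covYX m = b * varX m + g1 \<bullet> ((S + outer c rX + outer rY c + outer rY rX) *v p1) \<and>
     covWY m = b *\<^sub>R covWX m + g1 v* (S + outer rY c) \<and>
     covWX m = p1 v* (S + outer rX c) \<and>
     varY m > b\<^sup>2 * varX m + g1 \<bullet> ((S + outer rY rY + 2 *\<^sub>R outer rY c) *v g1)
              + 2 * b * (g1 \<bullet> ((S + outer c rX + outer rY c + outer rY rX) *v p1)) \<and>
     varX m > p1 \<bullet> ((S + 2 *\<^sub>R outer rX c + outer rX rX) *v p1) \<and>
     1 > c \<bullet> (matrix_inv S *v c)}"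

end

theory Submission imports Defs begin

lemma minv1: "matrix_inv (mat 1 :: real^'n::finite^'n) = mat 1"
proof -
  have "\<exists>A'::real^'n^'n. mat 1 ** A' = mat 1 \<and> A' ** mat 1 = mat 1" by (rule exI[of _ "mat 1"]) simp
  from someI_ex[OF this] show ?thesis unfolding matrix_inv_def by simp
qed

lemma outer_mv: "outer u v *v p = (v \<bullet> p) *\<^sub>R u"
  by (simp add: outer_def matrix_vector_mult_def vec_eq_iff inner_vec_def sum_distrib_left mult_ac)

lemma outer_vm: "p v* outer u v = (p \<bullet> u) *\<^sub>R v"
  by (simp add: outer_def vector_matrix_mult_def vec_eq_iff inner_vec_def sum_distrib_left mult_ac)

lemma sc_mv: "((k::real) *\<^sub>R A) *v p = k *\<^sub>R (A *v (p::real^'n::finite))"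
  by (simp add: matrix_vector_mult_def vec_eq_iff sum_distrib_left mult_ac)

lemma bset_iff:
  fixes m :: "'n::finite moments"
  assumes "varW m = mat 1"
  shows "b \<in> BSet m rX rY c \<longleftrightarrow> (\<exists>p1 g1.
     covYX m = b * varX m + (g1 \<bullet> p1 + (g1 \<bullet> c) * (rX \<bullet> p1) + (g1 \<bullet> rY) * (c \<bullet> p1) + (g1 \<bullet> rY) * (rX \<bullet> p1)) \<and>
     covWY m = b *\<^sub>R covWX m + g1 + (g1 \<bullet> rY) *\<^sub>R c \<and>
     covWX m = p1 + (p1 \<bullet> rX) *\<^sub>R c \<and>
     varY m > b\<^sup>2 * varX m + (g1 \<bullet> g1 + (g1 \<bullet> rY)^2 + 2 * (g1 \<bullet> rY) * (c \<bullet> g1))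
       + 2 * b * (g1 \<bullet> p1 + (g1 \<bullet> c) * (rX \<bullet> p1) + (g1 \<bullet> rY) * (c \<bullet> p1) + (g1 \<bullet> rY) * (rX \<bullet> p1)) \<and>
     varX m > p1 \<bullet> p1 + 2 * (rX \<bullet> p1) * (c \<bullet> p1) + (rX \<bullet> p1)^2 \<and>
     1 > c \<bullet> c)"
  unfolding BSet_def Let_def assms
  by (simp add: minv1 outer_mv outer_vm sc_mv matrix_vector_mult_add_rdistrib vector_matrix_mult_add_rdistrib
      inner_add_right inner_scaleR_right inner_commute power2_eq_square algebra_simps)


lemma key:
  fixes k0 Z qq ka de la V :: real
  assumes "k0 > 0" "Z > 0" "Z < k0" "qq > 0" "ka \<noteq> 0" "Z = ka^2 * qq" "de * k0 = - la * ka * qq"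
  shows "(V + k0 * de^2 > la^2 * qq) \<longleftrightarrow> de^2 < V / k0 * (Z / (k0 - Z))"
proof -
    have "(la*ka*qq)^2 = (de*k0)^2" using assms(7) by (simp add: power2_eq_square)
  then have "la^2 * qq * Z = de^2 * k0^2" using assms(6) by (simp add: power2_eq_square algebra_simps)
  then have "la^2 * qq = de^2 * k0^2 / Z" using assms(2) by (simp add: field_simps)
  moreover have "(V + k0 * de^2 > de^2 * k0^2 / Z) \<longleftrightarrow> V * Z > de^2 * k0 * (k0 - Z)"
  proof -
    have "(V + k0 * de^2 > de^2 * k0^2 / Z) \<longleftrightarrow> (V + k0 * de^2) * Z > de^2 * k0^2"
      using assms(2) by (simp add: field_simps)
    then show ?thesis by (simp add: algebra_simps power2_eq_square)
  qed
  moreover have "de^2 < V / k0 * (Z / (k0 - Z)) \<longleftrightarrow> de^2 * k0 * (k0 - Z) < V * Z"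
  proof -
    have p: "k0 * (k0 - Z) > 0" using assms(1,3) by simp
    have "V / k0 * (Z / (k0 - Z)) = (V * Z) / (k0 * (k0 - Z))" by simp
    then show ?thesis using p by (simp add: pos_less_divide_eq mult.assoc)
  qed
  ultimately show ?thesis by simp
qed

lemma sqrt_iv: "D \<ge> 0 \<Longrightarrow> (b \<in> {be - sqrt D <..< be + sqrt D}) \<longleftrightarrow> (b - be)^2 < (D::real)"
proof -
  assume "D \<ge> 0"
  have "(b - be)^2 < D \<longleftrightarrow> \<bar>b - be\<bar> < sqrt D"
    by (metis real_sqrt_abs real_sqrt_less_iff)
  then show ?thesis by (auto simp: abs_less_iff)
qed


lemma alg1:
  fixes s t c rX p1 g1 :: "real^'n::finite"
  assumes "p1 = s - ka *\<^sub>R c" "g1 = t - b *\<^sub>R s - la *\<^sub>R c" "p1 \<bullet> rX = ka"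
  shows "g1 \<bullet> p1 + (g1 \<bullet> c)*(rX \<bullet> p1) + la*(c \<bullet> p1) + la*(rX \<bullet> p1) = t \<bullet> s - b*(s \<bullet> s) + la*ka*(1 - c \<bullet> c)"
proof -
  have r: "rX \<bullet> p1 = ka" using assms(3) by (simp add: inner_commute)
  show ?thesis unfolding r unfolding assms(1,2)
    by (simp add: inner_diff_left inner_diff_right inner_commute algebra_simps)
qed

lemma alg4:
  fixes s t c g1 :: "real^'n::finite"
  assumes "g1 = t - b *\<^sub>R s - la *\<^sub>R c"
  shows "g1 \<bullet> g1 + la^2 + 2*la*(c \<bullet> g1) = t \<bullet> t - 2*b*(t \<bullet> s) + b^2*(s \<bullet> s) + la^2*(1 - c \<bullet> c)"
  unfolding assms
  by (simp add: inner_diff_left inner_diff_right inner_commute algebra_simps power2_eq_square)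

lemma alg5:
  fixes s c p1 :: "real^'n::finite"
  assumes "p1 = s - ka *\<^sub>R c"
  shows "p1 \<bullet> p1 + 2*ka*(c \<bullet> p1) + ka^2 = s \<bullet> s + ka^2*(1 - c \<bullet> c)"
  unfolding assms
  by (simp add: inner_diff_left inner_diff_right inner_commute algebra_simps power2_eq_square)


theorem mainTheorem19:
  fixes m :: "'n::finite moments" and rX c :: "real^'n"
  assumes "varX m = 1" and "varW m = mat 1"
    and "var_pos_def m"
    and "covWY m \<noteq> covYX m *\<^sub>R covWX m"
    and "norm c < 1"
    and "rX \<bullet> c \<noteq> -1"
    and "0 < (z_X m rX c)\<^sup>2" and "(z_X m rX c)\<^sup>2 < k0 m"
  shows "\<exists>B0. (\<exists>x. B0 \<subseteq> {x}) \<and>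
     (\<Union>rY. BSet m rX rY c) =
       {beta_med m - sqrt (devsq m (z_X m rX c)) <..< beta_med m + sqrt (devsq m (z_X m rX c))} - B0"
proof -
  note vX = assms(1) and vW = assms(2)
  define s where "s = covWX m"
  define t where "t = covWY m"
  define a where "a = covYX m"
  define vY where "vY = varY m"
  define K0 where "K0 = k0 m"
  define K1 where "K1 = k1 m"
  have k0e: "K0 = 1 - s \<bullet> s" unfolding K0_def k0_def s_def vX vW minv1 by simp
  have k1e: "K1 = a - t \<bullet> s" unfolding K1_def k1_def s_def t_def a_def vW minv1 by simp
  have pd: "\<And>x y w. (x, y, w) \<noteq> (0, 0, 0) \<Longrightarrow>
        x\<^sup>2 * vY + y\<^sup>2 + w \<bullet> w + 2 * x * y * a + 2 * x * (w \<bullet> t) + 2 * y * (w \<bullet> s) > 0"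
    using assms(3) unfolding var_pos_def_def vW vX s_def t_def a_def vY_def by auto
  have "1 - s \<bullet> s > 0" using pd[of 0 1 "-s"] by simp
  then have K0pos: "K0 > 0" using k0e by simp
  define be where "be = K1 / K0"
  have bek: "be * K0 = K1" unfolding be_def using K0pos by simp
  have proj: "proj_coefs m = (be, t - be *\<^sub>R s)"
    unfolding proj_coefs_def
  proof (rule the_equality)
    show "case (be, t - be *\<^sub>R s) of (b, g) \<Rightarrow>
      covYX m = b * varX m + g \<bullet> covWX m \<and> covWY m = b *\<^sub>R covWX m + varW m *v g"
      using bek k0e k1e unfolding vX vW a_def[symmetric] s_def[symmetric] t_def[symmetric]
      by (simp add: inner_diff_left inner_commute algebra_simps)
  next
    fix bg assume h: "case bg of (b, g) \<Rightarrow>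
      covYX m = b * varX m + g \<bullet> covWX m \<and> covWY m = b *\<^sub>R covWX m + varW m *v g"
    obtain b g where bg: "bg = (b, g)" by (cases bg)
    have h1: "a = b + g \<bullet> s" and h2: "t = b *\<^sub>R s + g"
      using h unfolding bg vX vW a_def s_def t_def by auto
    have ge: "g = t - b *\<^sub>R s" using h2 by simp
    have "a = b + t \<bullet> s - b * (s \<bullet> s)" using h1 unfolding ge by (simp add: inner_diff_left inner_diff_right inner_commute)
    then have "b * K0 = K1" unfolding k0e k1e by (simp add: algebra_simps)
    then have "b = be" unfolding be_def using K0pos by (simp add: field_simps)
    then show "bg = (be, t - be *\<^sub>R s)" using bg ge by simp
  qed
  have bm: "beta_med m = be" unfolding beta_med_def proj by simp
  define V where "V = vY - be * a - (t - be *\<^sub>R s) \<bullet> t"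
  have vp: "var_Y_perp_XW m = V" unfolding var_Y_perp_XW_def proj V_def vY_def a_def t_def by simp
  have V2: "V = vY - t \<bullet> t - be * K1"
    unfolding V_def k1e by (simp add: inner_diff_left inner_commute algebra_simps)
  have "V > 0"
  proof -
    have "0 < 1\<^sup>2 * vY + (- be)\<^sup>2 + (-(t - be *\<^sub>R s)) \<bullet> (-(t - be *\<^sub>R s)) + 2 * 1 * (- be) * a
       + 2 * 1 * ((-(t - be *\<^sub>R s)) \<bullet> t) + 2 * (- be) * ((-(t - be *\<^sub>R s)) \<bullet> s)"
      by (rule pd) simp
    also have "\<dots> = vY - t \<bullet> t + be * (be * K0) - 2 * be * K1"
      unfolding k0e k1e
      by (simp add: inner_diff_left inner_diff_right inner_commute algebra_simps power2_eq_square)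
    also have "\<dots> = V" unfolding V2 bek by simp
    finally show ?thesis .
  qed
  define qq where "qq = 1 - c \<bullet> c"
  have "c \<bullet> c < 1" using assms(5) by (metis power2_norm_eq_inner abs_norm_cancel abs_square_less_1)
  then have qqpos: "qq > 0" unfolding qq_def by simp
  define ka where "ka = (rX \<bullet> s) / (1 + rX \<bullet> c)"
  have den: "1 + rX \<bullet> c \<noteq> 0" using assms(6) by (metis add.commute add_eq_0_iff)
  define z where "z = z_X m rX c"
  have ze: "z = ka * sqrt qq"
    unfolding z_def z_X_def ka_def qq_def s_def power2_norm_eq_inner by simp
  define Z where "Z = z^2"
  have Ze: "Z = ka^2 * qq" unfolding Z_def ze using qqpos by (simp add: power_mult_distrib)
  have Zpos: "Z > 0" and ZK: "Z < K0" using assms(7,8) unfolding Z_def z_def K0_def by auto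
  have kanz: "ka \<noteq> 0" using Zpos Ze by auto
  define D where "D = devsq m z"
  have De: "D = V / K0 * (Z / (K0 - Z))" unfolding D_def devsq_def vp K0_def Z_def by simp
  have Dpos: "D \<ge> 0" unfolding De using `V > 0` K0pos ZK Zpos by simp
  define th where "th = K0 / (ka * qq)"
  define w where "w = s - th *\<^sub>R c"
  define v0 where "v0 = t - be *\<^sub>R s"
  define B0 where "B0 = {b. b \<noteq> be \<and> v0 = (b - be) *\<^sub>R w}"
  have v0nz: "v0 \<noteq> 0"
  proof
    assume "v0 = 0"
    then have te: "t = be *\<^sub>R s" unfolding v0_def by simp
    have "K1 = a - be * (s \<bullet> s)" unfolding k1e te by simp
    then have "be = a" using bek k0e by (simp add: algebra_simps)
    then show False using te assms(4) unfolding t_def a_def s_def by simp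
  qed
  have B0one: "\<exists>x. B0 \<subseteq> {x}"
  proof -
    have "b1 = b2" if "b1 \<in> B0" "b2 \<in> B0" for b1 b2
    proof -
      have e1: "v0 = (b1 - be) *\<^sub>R w" and e2: "v0 = (b2 - be) *\<^sub>R w" using that unfolding B0_def by auto
      have "w \<noteq> 0" using e1 v0nz by auto
      then have "b1 - be = b2 - be" using e1 e2 by (metis scaleR_cancel_right)
      then show ?thesis by simp
    qed
    then show ?thesis by blast
  qed
  have Kth: "th * (ka * qq) = K0" unfolding th_def using kanz qqpos by simp
  have cc1: "c \<bullet> c < 1" using qqpos unfolding qq_def by simp
  have mem: "b \<in> (\<Union>rY. BSet m rX rY c) \<longleftrightarrow> (b - be)^2 < D \<and> b \<notin> B0" for b
  proof
    assume "b \<in> (\<Union>rY. BSet m rX rY c)"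
    then obtain rY where "b \<in> BSet m rX rY c" by blast
    then obtain p1 g1 where
      eq1: "a = b + (g1 \<bullet> p1 + (g1 \<bullet> c) * (rX \<bullet> p1) + (g1 \<bullet> rY) * (c \<bullet> p1) + (g1 \<bullet> rY) * (rX \<bullet> p1))"
      and eq2: "t = b *\<^sub>R s + g1 + (g1 \<bullet> rY) *\<^sub>R c"
      and eq3: "s = p1 + (p1 \<bullet> rX) *\<^sub>R c"
      and eq4: "vY > b\<^sup>2 + (g1 \<bullet> g1 + (g1 \<bullet> rY)^2 + 2 * (g1 \<bullet> rY) * (c \<bullet> g1))
       + 2 * b * (g1 \<bullet> p1 + (g1 \<bullet> c) * (rX \<bullet> p1) + (g1 \<bullet> rY) * (c \<bullet> p1) + (g1 \<bullet> rY) * (rX \<bullet> p1))"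
      unfolding bset_iff[OF vW] vX a_def s_def t_def vY_def by auto
    define la where "la = g1 \<bullet> rY"
    have "rX \<bullet> s = rX \<bullet> (p1 + (p1 \<bullet> rX) *\<^sub>R c)" using eq3 by simp
    then have "(p1 \<bullet> rX) * (1 + rX \<bullet> c) = rX \<bullet> s" by (simp add: inner_add_right inner_commute algebra_simps)
    then have pi: "p1 \<bullet> rX = ka" unfolding ka_def using den by (simp add: field_simps)
    have p1e: "p1 = s - ka *\<^sub>R c" using eq3 pi by (simp add: algebra_simps)
    have g1e: "g1 = t - b *\<^sub>R s - la *\<^sub>R c" using eq2 unfolding la_def by (simp add: algebra_simps)
    have T: "g1 \<bullet> p1 + (g1 \<bullet> c)*(rX \<bullet> p1) + la*(c \<bullet> p1) + la*(rX \<bullet> p1) = t \<bullet> s - b*(s \<bullet> s) + la*ka*qq"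
      using alg1[OF p1e g1e pi] unfolding qq_def .
    have G: "g1 \<bullet> g1 + la^2 + 2*la*(c \<bullet> g1) = t \<bullet> t - 2*b*(t \<bullet> s) + b^2*(s \<bullet> s) + la^2*qq"
      using alg4[OF g1e] unfolding qq_def .
    have e1: "a = b + (t \<bullet> s - b*(s \<bullet> s) + la*ka*qq)" using eq1 T unfolding la_def by simp
    have e4: "vY > b\<^sup>2 + (t \<bullet> t - 2*b*(t \<bullet> s) + b^2*(s \<bullet> s) + la^2*qq) + 2 * b * (t \<bullet> s - b*(s \<bullet> s) + la*ka*qq)"
      using eq4 T G unfolding la_def by simp
    have dek: "(b - be) * K0 = - la * ka * qq"
      using e1 bek unfolding k0e k1e by (simp add: algebra_simps)
    have Vid: "V + K0 * (b - be)^2 = vY - t \<bullet> t + K0 * b^2 - 2 * b * K1"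
      unfolding V2 bek[symmetric] by (simp add: algebra_simps power2_eq_square)
    have "vY - t \<bullet> t + K0 * b^2 - 2 * b * K1 > la^2 * qq"
      unfolding k1e e1 k0e using e4 by (simp add: algebra_simps power2_eq_square)
    then have "V + K0 * (b - be)^2 > la^2 * qq" using Vid by simp
    then have dlt: "(b - be)^2 < D" unfolding De using key[OF K0pos Zpos ZK qqpos kanz Ze dek] by simp
    have "b \<notin> B0"
    proof
      assume "b \<in> B0"
      then have bne: "b \<noteq> be" and v0e: "v0 = (b - be) *\<^sub>R w" unfolding B0_def by auto
      have lnz: "la \<noteq> 0" using dek bne K0pos by auto
      have lath: "la = - (b - be) * th"
      proof -
        have "la * (ka * qq) = - (b - be) * th * (ka * qq)" using dek Kth by (simp add: algebra_simps)
        then show ?thesis using kanz qqpos by simp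
      qed
      have "g1 = v0 - (b - be) *\<^sub>R w" unfolding g1e lath v0_def w_def by (simp add: algebra_simps)
      then have "g1 = 0" using v0e by simp
      then show False using lnz unfolding la_def by simp
    qed
    then show "(b - be)^2 < D \<and> b \<notin> B0" using dlt by simp
  next
    assume "(b - be)^2 < D \<and> b \<notin> B0"
    then have dlt: "(b - be)^2 < D" and nb: "b \<notin> B0" by auto
    define la where "la = - (b - be) * th"
    define g1 where "g1 = t - b *\<^sub>R s - la *\<^sub>R c"
    define p1 where "p1 = s - ka *\<^sub>R c"
    define rY where "rY = (if la = 0 then 0 else (la / (g1 \<bullet> g1)) *\<^sub>R g1)"
    have lae: "g1 \<bullet> rY = la"
    proof (cases "la = 0")
      case True then show ?thesis unfolding rY_def by simp
    next
      case False
      then have "b \<noteq> be" unfolding la_def by auto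
      moreover have "g1 = v0 - (b - be) *\<^sub>R w" unfolding g1_def v0_def w_def la_def by (simp add: algebra_simps)
      ultimately have "g1 \<noteq> 0" using nb unfolding B0_def by auto
      then show ?thesis unfolding rY_def using False by simp
    qed
    have "ka * (1 + rX \<bullet> c) = rX \<bullet> s" unfolding ka_def using den by simp
    then have pi: "p1 \<bullet> rX = ka" unfolding p1_def by (simp add: inner_diff_left inner_commute algebra_simps)
    have p1e: "p1 = s - ka *\<^sub>R c" by (simp add: p1_def)
    have g1e: "g1 = t - b *\<^sub>R s - la *\<^sub>R c" by (simp add: g1_def)
    have T: "g1 \<bullet> p1 + (g1 \<bullet> c)*(rX \<bullet> p1) + la*(c \<bullet> p1) + la*(rX \<bullet> p1) = t \<bullet> s - b*(s \<bullet> s) + la*ka*qq"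
      using alg1[OF p1e g1e pi] unfolding qq_def .
    have G: "g1 \<bullet> g1 + la^2 + 2*la*(c \<bullet> g1) = t \<bullet> t - 2*b*(t \<bullet> s) + b^2*(s \<bullet> s) + la^2*qq"
      using alg4[OF g1e] unfolding qq_def .
    have P: "p1 \<bullet> p1 + 2*ka*(c \<bullet> p1) + ka^2 = s \<bullet> s + ka^2*qq"
      using alg5[OF p1e] unfolding qq_def .
    have dek: "(b - be) * K0 = - la * ka * qq" unfolding la_def using Kth[symmetric] by (simp add: algebra_simps)
    have e1: "a = b + (t \<bullet> s - b*(s \<bullet> s) + la*ka*qq)"
      using dek bek unfolding k0e k1e by (simp add: algebra_simps)
    have Vid: "V + K0 * (b - be)^2 = vY - t \<bullet> t + K0 * b^2 - 2 * b * K1"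
      unfolding V2 bek[symmetric] by (simp add: algebra_simps power2_eq_square)
    have "V + K0 * (b - be)^2 > la^2 * qq"
      using dlt unfolding De using key[OF K0pos Zpos ZK qqpos kanz Ze dek] by simp
    then have X: "vY - t \<bullet> t + K0 * b^2 - 2 * b * K1 > la^2 * qq" using Vid by simp
    have e4: "vY > b\<^sup>2 + (t \<bullet> t - 2*b*(t \<bullet> s) + b^2*(s \<bullet> s) + la^2*qq) + 2 * b * (t \<bullet> s - b*(s \<bullet> s) + la*ka*qq)"
      using X unfolding k1e e1 k0e by (simp add: algebra_simps power2_eq_square)
    have r: "rX \<bullet> p1 = ka" using pi by (simp add: inner_commute)
    have "b \<in> BSet m rX rY c"
      unfolding bset_iff[OF vW] vX a_def[symmetric] s_def[symmetric] t_def[symmetric] vY_def[symmetric]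
    proof (intro exI conjI)
      show "a = b * 1 + (g1 \<bullet> p1 + (g1 \<bullet> c) * (rX \<bullet> p1) + (g1 \<bullet> rY) * (c \<bullet> p1) + (g1 \<bullet> rY) * (rX \<bullet> p1))"
        using e1 T unfolding lae by simp
      have "t = b *\<^sub>R s + g1 + la *\<^sub>R c" unfolding g1_def by simp
      then show "t = b *\<^sub>R s + g1 + (g1 \<bullet> rY) *\<^sub>R c" unfolding lae .
      show "s = p1 + (p1 \<bullet> rX) *\<^sub>R c" unfolding pi by (simp add: p1e)
      show "vY > b\<^sup>2 * 1 + (g1 \<bullet> g1 + (g1 \<bullet> rY)^2 + 2 * (g1 \<bullet> rY) * (c \<bullet> g1))
       + 2 * b * (g1 \<bullet> p1 + (g1 \<bullet> c) * (rX \<bullet> p1) + (g1 \<bullet> rY) * (c \<bullet> p1) + (g1 \<bullet> rY) * (rX \<bullet> p1))"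
        using e4 T G unfolding lae by simp
      show "1 > p1 \<bullet> p1 + 2 * (rX \<bullet> p1) * (c \<bullet> p1) + (rX \<bullet> p1)^2"
        using P ZK unfolding r k0e Ze by simp
      show "1 > c \<bullet> c" by (rule cc1)
    qed
    then show "b \<in> (\<Union>rY. BSet m rX rY c)" by blast
  qed
  show ?thesis
  proof (rule exI[of _ B0], intro conjI)
    show "\<exists>x. B0 \<subseteq> {x}" by (rule B0one)
    show "(\<Union>rY. BSet m rX rY c) =
       {beta_med m - sqrt (devsq m (z_X m rX c)) <..< beta_med m + sqrt (devsq m (z_X m rX c))} - B0"
      unfolding bm z_def[symmetric] D_def[symmetric]
      using mem sqrt_iv[OF Dpos] by blast
  qed
qed

end
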